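(* Let $S=\{n_0<n_1<n_2<\cdots\}$ be an infinite subset of the positive integers with unbounded gaps, i.e. $\sup_i (n_{i+1}-n_i)=\infty$. Then the $S$-gap shift $X(S)$ does not admit a Gibbs state.
   Context: For nonempty $S$, the $S$-gap shift $X(S)\subseteq\{0,1\}^{\mathbb{Z}}$ is the set of bi-infinite binary sequences in which every maximal block of consecutive zeros (between two ones) has length belonging to $S$; typical points have the form $\cdots10^{n_{-1}}10^{n_0}10^{n_1}\cdots$ with $n_j\in S$. $\mathcal{B}_r(X)$ is the set of words of length $r$ occurring in points of $X$, $h(X)=\lim_r\frac1r\log|\mathcal{B}_r(X)|$ with $\log$ to base $2$, and $[\omega]$ is the cylinder set of points having $\omega$ at a fixed position. A Borel probability measure $\mu$ on $X$ is a Gibbs state if there exist $c_1,c_2>0$ such that for all words $\omega\in\mathcal{B}(X)$ of length $r$, $c_1\le\mu([\omega])\,2^{r h(X)}\le c_2$. *)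

theory Defs
  imports "HOL-Analysis.Analysis" "HOL-Probability.Probability"
begin

text \<open>Points of the full shift are bi-infinite binary sequences, encoded as
  functions int to bool (True = symbol 1, False = symbol 0). The full shift
  carries the product topology (library instance for function types).\<close>

definition gap_shift :: "nat set \<Rightarrow> (int \<Rightarrow> bool) set" where
  "gap_shift S = {x. \<forall>i j. i < j \<and> x i \<and> x j \<and> (\<forall>k. i < k \<and> k < j \<longrightarrow> \<not> x k)
                        \<longrightarrow> nat (j - i - 1) \<in> S}"

definition words_of_len :: "nat \<Rightarrow> (int \<Rightarrow> bool) set \<Rightarrow> bool list set" where
  "words_of_len r X = {w. length w = r \<and> (\<exists>x\<in>X. \<exists>n::int. \<forall>k<r. w ! k = x (n + int k))}"

definition lang :: "(int \<Rightarrow> bool) set \<Rightarrow> bool list set" where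
  "lang X = (\<Union>r. words_of_len r X)"

definition entropy :: "(int \<Rightarrow> bool) set \<Rightarrow> real" where
  "entropy X = lim (\<lambda>r. log 2 (real (card (words_of_len r X))) / real r)"

definition cyl :: "(int \<Rightarrow> bool) set \<Rightarrow> bool list \<Rightarrow> (int \<Rightarrow> bool) set" where
  "cyl X w = {x\<in>X. \<forall>k<length w. x (int k) = w ! k}"

definition is_gibbs_state :: "(int \<Rightarrow> bool) set \<Rightarrow> (int \<Rightarrow> bool) measure \<Rightarrow> bool" where
  "is_gibbs_state X \<mu> \<longleftrightarrow>
     prob_space \<mu> \<and> sets \<mu> = sets (restrict_space borel X) \<and>
     (\<exists>c1 c2 :: real. c1 > 0 \<and> c2 > 0 \<and>
        (\<forall>w\<in>lang X. c1 \<le> measure \<mu> (cyl X w) * 2 powr (real (length w) * entropy X)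
                   \<and> measure \<mu> (cyl X w) * 2 powr (real (length w) * entropy X) \<le> c2))"

end

theory Submission
  imports Defs
begin

lemma single_in_gap: "(\<lambda>k::int. k = j) \<in> gap_shift S"
  unfolding gap_shift_def by auto

lemma word_in_lang:
  assumes "\<forall>k<length w. w ! k = (int k = j)"
  shows "w \<in> lang (gap_shift S)"
proof -
  have "w \<in> words_of_len (length w) (gap_shift S)"
    unfolding words_of_len_def
    using assms single_in_gap[of j S] by (auto intro!: bexI[where x="\<lambda>k::int. k = j"] exI[where x=0])
  then show ?thesis unfolding lang_def by blast
qed

lemma no_between:
  fixes S :: "nat set"
  assumes "infinite S" "s \<in> S" "enumerate S i < s" "s < enumerate S (Suc i)"
  shows False
proof -
  obtain k where k: "enumerate S k = s" using enumerate_Ex[OF assms(1,2)] by blast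
  have sm: "strict_mono (enumerate S)" using strict_mono_enumerate[OF assms(1)] .
  have "i < k" using assms(3) k sm by (metis strict_mono_less)
  moreover have "k < Suc i" using assms(4) k sm by (metis strict_mono_less)
  ultimately show False by simp
qed

lemma cyl_incl:
  assumes inf: "infinite S" and a: "a = enumerate S i" and b: "b = enumerate S (Suc i)"
  shows "cyl (gap_shift S) ([True] @ replicate (a+1) False) \<subseteq> cyl (gap_shift S) ([True] @ replicate b False)"
proof
  fix x assume x: "x \<in> cyl (gap_shift S) ([True] @ replicate (a+1) False)"
  have xX: "x \<in> gap_shift S" using x unfolding cyl_def by auto
  have x0: "x 0" using x unfolding cyl_def by (auto dest: spec[where x=0])
  have xz: "\<not> x (int k)" if "1 \<le> k" "k \<le> a+1" for k
  proof -
    have "k < length ([True] @ replicate (a+1) False)" using that by simp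
    then have "x (int k) = ([True] @ replicate (a+1) False) ! k" using x unfolding cyl_def by auto
    also have "\<dots> = False" using that by (cases k) (auto simp: nth_append nth_Cons')
    finally show ?thesis by simp
  qed
  have ab: "a < b" using a b strict_mono_enumerate[OF inf] by (simp add: strict_mono_def)
  have nz: "\<not> x (int p)" if "1 \<le> p" "p \<le> b" for p
  proof (rule ccontr)
    assume "\<not> \<not> x (int p)"
    then have ex: "\<exists>p. 1 \<le> p \<and> p \<le> b \<and> x (int p)" using that by blast
    define q where "q = (LEAST p. 1 \<le> p \<and> p \<le> b \<and> x (int p))"
    have q: "1 \<le> q \<and> q \<le> b \<and> x (int q)" unfolding q_def using LeastI_ex[OF ex] .
    have qmin: "\<not> x (int m)" if "1 \<le> m" "m < q" for m
      using not_less_Least[of m "\<lambda>p. 1 \<le> p \<and> p \<le> b \<and> x (int p)"] that q unfolding q_def[symmetric]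
      by auto
    have qa: "q > a + 1" using xz q by (meson not_less)
    have "\<forall>k. 0 < k \<and> k < int q \<longrightarrow> \<not> x k"
    proof (intro allI impI)
      fix k :: int assume "0 < k \<and> k < int q"
      then have "1 \<le> nat k" "nat k < q" "int (nat k) = k" by auto
      then show "\<not> x k" using qmin[of "nat k"] by metis
    qed
    moreover have "(0::int) < int q" using qa by simp
    ultimately have "nat (int q - 0 - 1) \<in> S" using xX x0 q unfolding gap_shift_def by blast
    moreover have "nat (int q - 0 - 1) = q - 1" using qa by linarith
    ultimately have "q - 1 \<in> S" by simp
    moreover have "a < q - 1" "q - 1 < b" using qa q by auto
    ultimately show False using no_between[OF inf] a b by blast
  qed
  show "x \<in> cyl (gap_shift S) ([True] @ replicate b False)"
    unfolding cyl_def
  proof (intro CollectI conjI allI impI xX)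
    fix k assume "k < length ([True] @ replicate b False)"
    then have kb: "k \<le> b" by simp
    show "x (int k) = ([True] @ replicate b False) ! k"
    proof (cases k)
      case 0 then show ?thesis using x0 by simp
    next
      case (Suc m) then show ?thesis using nz[of k] kb by (simp add: nth_append)
    qed
  qed
qed

theorem corollary3p16:
  fixes S :: "nat set"
  assumes "S \<subseteq> {1..}"
    and "infinite S"
    and "\<forall>B::nat. \<exists>i. enumerate S (Suc i) - enumerate S i > B"
  shows "\<not> (\<exists>\<mu>. is_gibbs_state (gap_shift S) \<mu>)"
proof
  assume "\<exists>\<mu>. is_gibbs_state (gap_shift S) \<mu>"
  then obtain \<mu> where g: "is_gibbs_state (gap_shift S) \<mu>" by blast
  define X where "X = gap_shift S"
  define h where "h = entropy X"
  have ps: "prob_space \<mu>" using g unfolding is_gibbs_state_def by auto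
  then interpret prob_space \<mu> .
  obtain c1 c2 :: real where c1: "c1 > 0" and c2: "c2 > 0" and
    G: "\<And>w. w \<in> lang X \<Longrightarrow> c1 \<le> measure \<mu> (cyl X w) * 2 powr (real (length w) * h)
                   \<and> measure \<mu> (cyl X w) * 2 powr (real (length w) * h) \<le> c2"
    using g unfolding is_gibbs_state_def X_def h_def by blast
  have meas: "cyl X w \<in> sets \<mu>" if "w \<in> lang X" for w
  proof (rule ccontr)
    assume "cyl X w \<notin> sets \<mu>"
    then have "measure \<mu> (cyl X w) = 0" by (simp add: measure_notin_sets)
    then show False using G[OF that] c1 by simp
  qed
  show False
  proof (cases "h > 0")
    case True
    define B where "B = nat \<lceil>log 2 (c2 / c1) / h\<rceil> + 1"
    obtain i where i: "enumerate S (Suc i) - enumerate S i > B" using assms(3) by blast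
    define a where "a = enumerate S i"
    define b where "b = enumerate S (Suc i)"
    define w where "w = [True] @ replicate (a+1) False"
    define w' where "w' = [True] @ replicate b False"
    have wl: "w \<in> lang X" unfolding X_def w_def by (rule word_in_lang[where j=0]) (auto simp: nth_append nth_Cons')
    have wl': "w' \<in> lang X" unfolding X_def w'_def by (rule word_in_lang[where j=0]) (auto simp: nth_append nth_Cons')
    have inc: "cyl X w \<subseteq> cyl X w'" unfolding X_def w_def w'_def
      by (rule cyl_incl[OF assms(2) a_def b_def])
    have mle: "measure \<mu> (cyl X w) \<le> measure \<mu> (cyl X w')"
      by (rule finite_measure_mono[OF inc meas[OF wl']])
    have g1: "c1 \<le> measure \<mu> (cyl X w) * 2 powr (real (a+2) * h)" using G[OF wl] by (simp add: w_def)
    have g2: "measure \<mu> (cyl X w') * 2 powr (real (b+1) * h) \<le> c2" using G[OF wl'] by (simp add: w'_def)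
    have bab: "real b - real a - 1 \<ge> real B" using i unfolding a_def[symmetric] b_def[symmetric] by linarith
    have "c1 \<le> measure \<mu> (cyl X w') * 2 powr (real (a+2) * h)"
    proof -
      have "prob (cyl X w) * 2 powr (real (a + 2) * h) \<le> prob (cyl X w') * 2 powr (real (a + 2) * h)"
        using mle by (intro mult_right_mono) auto
      then show ?thesis using g1 by linarith
    qed
    also have "\<dots> = (measure \<mu> (cyl X w') * 2 powr (real (b+1) * h)) * 2 powr (- ((real b - real a - 1) * h))"
      by (simp add: powr_add[symmetric] algebra_simps)
    also have "\<dots> \<le> c2 * 2 powr (- ((real b - real a - 1) * h))"
      using g2 by (simp add: mult_right_mono)
    also have "\<dots> \<le> c2 * 2 powr (- (real B * h))"
      using bab True c2 by (intro mult_left_mono powr_mono) (auto intro: mult_right_mono)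
    finally have A: "c1 \<le> c2 * 2 powr (- (real B * h))" .
    have "real B * h > log 2 (c2 / c1)"
    proof -
      have "real B > log 2 (c2 / c1) / h" unfolding B_def by linarith
      then show ?thesis using True by (simp add: pos_divide_less_eq)
    qed
    then have "2 powr (real B * h) > 2 powr (log 2 (c2 / c1))" by simp
    then have "2 powr (real B * h) > c2 / c1" using c1 c2 by simp
    then have "c2 * 2 powr (- (real B * h)) < c1"
      using c1 by (simp add: powr_minus divide_simps mult.commute)
    then show False using A by simp
  next
    case False
    define r where "r = nat \<lceil>1 / c1\<rceil> + 1"
    define u where "u j = replicate j False @ [True] @ replicate (r - 1 - j) False" for j
    have ul: "u j \<in> lang X" if "j < r" for j
      unfolding X_def u_def by (rule word_in_lang[where j="int j"]) (auto simp: nth_append nth_Cons')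
    have ulen: "length (u j) = r" if "j < r" for j using that by (simp add: u_def)
    have lb: "c1 \<le> measure \<mu> (cyl X (u j))" if "j < r" for j
    proof -
      have "c1 \<le> measure \<mu> (cyl X (u j)) * 2 powr (real r * h)" using G[OF ul[OF that]] ulen[OF that] by simp
      also have "\<dots> \<le> measure \<mu> (cyl X (u j)) * 1"
      proof (intro mult_left_mono)
        have "real r * h \<le> 0" using False by (simp add: mult_nonneg_nonpos)
        then show "2 powr (real r * h) \<le> 1" using powr_mono[of "real r * h" 0 2] by simp
      qed auto
      finally show ?thesis by simp
    qed
    have disj: "disjoint_family_on (\<lambda>j. cyl X (u j)) {..<r}"
      unfolding disjoint_family_on_def
    proof (intro ballI impI)
      fix j k assume jk: "j \<in> {..<r}" "k \<in> {..<r}" "j \<noteq> k"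
      show "cyl X (u j) \<inter> cyl X (u k) = {}"
      proof (rule ccontr)
        assume "cyl X (u j) \<inter> cyl X (u k) \<noteq> {}"
        then obtain x where x: "x \<in> cyl X (u j)" "x \<in> cyl X (u k)" by blast
        have "x (int j) = u j ! j" using x(1) jk unfolding cyl_def by (auto simp: u_def)
        moreover have "u j ! j" by (simp add: u_def nth_append)
        moreover have "x (int j) = u k ! j" using x(2) jk unfolding cyl_def by (auto simp: u_def)
        moreover have "\<not> u k ! j" using jk by (auto simp: u_def nth_append nth_Cons')
        ultimately show False by simp
      qed
    qed
    have "measure \<mu> (\<Union>j\<in>{..<r}. cyl X (u j)) = (\<Sum>j<r. measure \<mu> (cyl X (u j)))"
      by (rule finite_measure_finite_Union) (auto intro: meas ul disj)
    moreover have "(\<Sum>j<r. measure \<mu> (cyl X (u j))) \<ge> real r * c1"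
      using sum_mono[of "{..<r}" "\<lambda>_. c1" "\<lambda>j. measure \<mu> (cyl X (u j))"] lb by simp
    moreover have "measure \<mu> (\<Union>j\<in>{..<r}. cyl X (u j)) \<le> 1" by (rule prob_le_1)
    moreover have "real r * c1 > 1"
    proof -
      have "real r > 1 / c1" unfolding r_def by linarith
      then show ?thesis using c1 by (simp add: divide_less_eq)
    qed
    ultimately show False by linarith
  qed
qed

end
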